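(* Let $\nu$ be a translation invariant EA$_\beta$ spin glass distribution on $\mathbb Z^2$ ($0\le\beta<\infty$), and let $\gamma$ be a finite dual graph which is a union of disjoint simple dual cycles. Then for every $c>0$, \[\mathbb P_\nu\Big(\sum_{e^*\in\gamma}w_e\sigma_{i_e}\sigma_{j_e}\leq -c\Big)<e^{-2\beta c},\] where $e=\{i_e,j_e\}$ is the primal edge crossed by $e^*$. Moreover, for every finite subgraph $D$ of $\mathbb Z^2$ with $D_\gamma\subseteq D$, every boundary condition $\tau$ and every realization of the interactions $w$, \[\mathbb P^{D,\tau}_{w,\beta}(\text{every edge of }\gamma\text{ is unsatisfied})<e^{-2\beta|w|(\gamma)}.\]
   Context: Lattice $\mathbb Z^2$, dual lattice $(\mathbb Z^2)^*=(\tfrac12,\tfrac12)+\mathbb Z^2$; a dual edge $e^*$ is identified with the unique edge $e$ of $\mathbb Z^2$ it crosses and carries its interaction $w_e$. $D_\gamma$ is the set of vertices of $\mathbb Z^2$ lying in the bounded domains enclosed by $\gamma$; $|w|(\gamma)=\sum_{e^*\in\gamma}|w_e|$. For a finite subgraph $C$: $C^c$ is the subgraph on $\mathbb Z^2\setminus V(C)$, $\partial C^c$ the vertices of $C^c$ with a neighbour in $C$, $\bar C=C\cup\partial C^c$; for $\tau\in\{\pm1\}^{V(\partial C^c)}$, $\Omega^{C,\tau}$ is the set of spin configurations on $\bar C$ equal to $\tau$ on $\partial C^c$, $\mathcal H^{C,\tau}_w(\sigma)=-\sum w_{xy}\sigma_x\sigma_y$ over neighbouring pairs in $\bar C$, and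 $\mathbb P^{C,\tau}_{w,\beta}(\sigma)\propto e^{-\beta\mathcal H^{C,\tau}_w(\sigma)}$. An EA$_\beta$ spin glass distribution is a joint law of interactions $w$ (i.i.d. standard normal) and spins $\sigma\in\{\pm1\}^{\mathbb Z^2}$ such that for every finite $C$ the conditional law of $\sigma_{\bar C}$ given $\sigma_{C^c}$ and $w$ is $\mathbb P^{C,\sigma_{\partial C^c}}_{w,\beta}$; translation invariance is under the diagonal action of $\mathbb Z^2$. An edge $e=\{i,j\}$ (and $e^*$) is unsatisfied if $w_e\sigma_i\sigma_j<0$. *)

theory Defs
  imports "HOL-Probability.Probability"
begin

type_synonym vtx = "int \<times> int"

text \<open>An edge of Z^2 is encoded by its lower/left endpoint and a direction flag:
  (x, False) is the horizontal edge {x, x+(1,0)}, (x, True) the vertical edge {x, x+(0,1)}.\<close>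
type_synonym edge = "vtx \<times> bool"

definition src :: "edge \<Rightarrow> vtx" where
  "src e = fst e"

definition tgt :: "edge \<Rightarrow> vtx" where
  "tgt e = (if snd e then (fst (fst e), snd (fst e) + 1) else (fst (fst e) + 1, snd (fst e)))"

definition adj :: "vtx \<Rightarrow> vtx \<Rightarrow> bool" where
  "adj u v \<longleftrightarrow> \<bar>fst u - fst v\<bar> + \<bar>snd u - snd v\<bar> = 1"

text \<open>Dual vertices (1/2,1/2) + (a,b) are encoded by the integer pair (a,b).
  A dual edge is identified with the primal edge it crosses; its two dual endpoints:\<close>
definition dual_ends :: "edge \<Rightarrow> vtx set" where
  "dual_ends e = (let (a, b) = fst e in
     if snd e then {(a - 1, b), (a, b)} else {(a, b - 1), (a, b)})"

definition dpt :: "vtx \<Rightarrow> real \<times> real" where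
  "dpt v = (real_of_int (fst v) + 1/2, real_of_int (snd v) + 1/2)"

definition ppt :: "vtx \<Rightarrow> real \<times> real" where
  "ppt v = (real_of_int (fst v), real_of_int (snd v))"

definition dual_seg :: "edge \<Rightarrow> (real \<times> real) set" where
  "dual_seg e = (let (a, b) = fst e in
     if snd e then closed_segment (dpt (a - 1, b)) (dpt (a, b))
     else closed_segment (dpt (a, b - 1)) (dpt (a, b)))"

definition simple_dual_cycle :: "vtx list \<Rightarrow> edge list \<Rightarrow> bool" where
  "simple_dual_cycle vs es \<longleftrightarrow>
     length vs \<ge> 3 \<and> length es = length vs \<and> distinct vs \<and>
     (\<forall>k < length vs. dual_ends (es ! k) = {vs ! k, vs ! ((k + 1) mod length vs)})"

definition union_disjoint_dual_cycles :: "edge set \<Rightarrow> bool" where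
  "union_disjoint_dual_cycles G \<longleftrightarrow>
     (\<exists>cs :: (vtx list \<times> edge list) list.
        cs \<noteq> [] \<and>
        (\<forall>c \<in> set cs. simple_dual_cycle (fst c) (snd c)) \<and>
        (\<forall>i < length cs. \<forall>j < length cs. i \<noteq> j \<longrightarrow>
            set (fst (cs ! i)) \<inter> set (fst (cs ! j)) = {}) \<and>
        G = (\<Union>c \<in> set cs. set (snd c)))"

text \<open>The curve in R^2 traced by gamma, and D_gamma: the vertices of Z^2 lying in the
  bounded domains (bounded connected components of the complement) enclosed by gamma.\<close>
definition curve :: "edge set \<Rightarrow> (real \<times> real) set" where
  "curve G = (\<Union>e \<in> G. dual_seg e)"

definition enclosed :: "edge set \<Rightarrow> vtx set" where
  "enclosed G = {v. ppt v \<notin> curve G \<and> bounded (connected_component_set (- curve G) (ppt v))}"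

definition absw :: "(edge \<Rightarrow> real) \<Rightarrow> edge set \<Rightarrow> real" where
  "absw w G = (\<Sum>e \<in> G. \<bar>w e\<bar>)"

text \<open>Finite subgraphs C are given by their finite vertex sets; the Hamiltonian runs over all
  neighbouring pairs of Z^2 inside C-bar, so only the vertex set matters.\<close>
definition bdry :: "vtx set \<Rightarrow> vtx set" where
  "bdry C = {v. v \<notin> C \<and> (\<exists>u \<in> C. adj u v)}"

definition cbar :: "vtx set \<Rightarrow> vtx set" where
  "cbar C = C \<union> bdry C"

definition Omega :: "vtx set \<Rightarrow> (vtx \<Rightarrow> real) \<Rightarrow> (vtx \<Rightarrow> real) set" where
  "Omega C \<tau> = {\<sigma>. (\<forall>v \<in> C. \<sigma> v = 1 \<or> \<sigma> v = -1) \<and> (\<forall>v \<in> bdry C. \<sigma> v = \<tau> v)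
                    \<and> (\<forall>v. v \<notin> cbar C \<longrightarrow> \<sigma> v = 0)}"

definition hamiltonian :: "vtx set \<Rightarrow> (edge \<Rightarrow> real) \<Rightarrow> (vtx \<Rightarrow> real) \<Rightarrow> real" where
  "hamiltonian C w \<sigma> = - (\<Sum>e \<in> {e. src e \<in> cbar C \<and> tgt e \<in> cbar C}. w e * \<sigma> (src e) * \<sigma> (tgt e))"

definition gibbs_prob :: "vtx set \<Rightarrow> (vtx \<Rightarrow> real) \<Rightarrow> (edge \<Rightarrow> real) \<Rightarrow> real \<Rightarrow> (vtx \<Rightarrow> real) set \<Rightarrow> real" where
  "gibbs_prob C \<tau> w \<beta> A =
     (\<Sum>\<sigma> \<in> Omega C \<tau> \<inter> A. exp (- \<beta> * hamiltonian C w \<sigma>)) /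
     (\<Sum>\<sigma> \<in> Omega C \<tau>. exp (- \<beta> * hamiltonian C w \<sigma>))"

definition unsatisfied :: "(edge \<Rightarrow> real) \<Rightarrow> (vtx \<Rightarrow> real) \<Rightarrow> edge \<Rightarrow> bool" where
  "unsatisfied w \<sigma> e \<longleftrightarrow> w e * \<sigma> (src e) * \<sigma> (tgt e) < 0"

definition spin :: "(vtx \<Rightarrow> bool) \<Rightarrow> vtx \<Rightarrow> real" where
  "spin s v = (if s v then 1 else -1)"

definition config_space :: "((edge \<Rightarrow> real) \<times> (vtx \<Rightarrow> bool)) measure" where
  "config_space = (\<Pi>\<^sub>M e \<in> UNIV. (borel :: real measure)) \<Otimes>\<^sub>M (\<Pi>\<^sub>M v \<in> UNIV. count_space (UNIV :: bool set))"

text \<open>Joint law nu of (w, sigma): w i.i.d. standard normal, and for every finite C the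
  conditional law of sigma on C-bar given w and sigma off C is P^{C, sigma|bdry C}_{w,beta}
  (DLR equations, stated via the defining property of conditional probabilities:
  for every event A measurable w.r.t. (w, sigma|_{C^c}) and every pattern xi on C).\<close>
definition EA_distribution :: "real \<Rightarrow> ((edge \<Rightarrow> real) \<times> (vtx \<Rightarrow> bool)) measure \<Rightarrow> bool" where
  "EA_distribution \<beta> M \<longleftrightarrow>
     prob_space M \<and> sets M = sets config_space \<and>
     distr M (\<Pi>\<^sub>M e \<in> UNIV. (borel :: real measure)) fst
       = (\<Pi>\<^sub>M e \<in> UNIV. density lborel std_normal_density) \<and>
     (\<forall>C A (\<xi> :: vtx \<Rightarrow> bool). finite C \<longrightarrow> A \<in> sets M \<longrightarrow>
        (\<forall>w s s'. (w, s) \<in> A \<longrightarrow> (\<forall>v. v \<notin> C \<longrightarrow> s' v = s v) \<longrightarrow> (w, s') \<in> A) \<longrightarrow>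
        measure M (A \<inter> {(w, s). \<forall>v \<in> C. s v = \<xi> v}) =
          set_lebesgue_integral M A
            (\<lambda>(w, s). gibbs_prob C (spin s) w \<beta> {\<sigma>. \<forall>v \<in> C. \<sigma> v = spin \<xi> v}))"

definition shift_cfg :: "vtx \<Rightarrow> (edge \<Rightarrow> real) \<times> (vtx \<Rightarrow> bool) \<Rightarrow> (edge \<Rightarrow> real) \<times> (vtx \<Rightarrow> bool)" where
  "shift_cfg a x = ((\<lambda>e. fst x ((fst (fst e) + fst a, snd (fst e) + snd a), snd e)),
                    (\<lambda>v. snd x (fst v + fst a, snd v + snd a)))"

definition translation_invariant :: "((edge \<Rightarrow> real) \<times> (vtx \<Rightarrow> bool)) measure \<Rightarrow> bool" where
  "translation_invariant M \<longleftrightarrow> (\<forall>a. distr M M (shift_cfg a) = M)"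

end

theory Submission
  imports Defs
begin


lemma cyc_ends_sub:
  assumes "simple_dual_cycle vs es" "e \<in> set es"
  shows "dual_ends e \<subseteq> set vs"
proof -
  from assms(2) obtain k where k: "k < length es" "e = es ! k" by (auto simp: in_set_conv_nth)
  have n: "length es = length vs" "length vs \<ge> 3" using assms(1) by (auto simp: simple_dual_cycle_def)
  have "dual_ends e = {vs ! k, vs ! ((k + 1) mod length vs)}"
    using assms(1) k n by (auto simp: simple_dual_cycle_def)
  moreover have "(k + 1) mod length vs < length vs" using n by (intro mod_less_divisor) auto
  ultimately show ?thesis using k n by auto
qed

lemma cyc_even:
  assumes "simple_dual_cycle vs es"
  shows "even (card {e \<in> set es. d \<in> dual_ends e})"
proof (cases "d \<in> set vs")
  case False
  then have "{e \<in> set es. d \<in> dual_ends e} = {}" using cyc_ends_sub[OF assms] by auto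
  then show ?thesis by (metis card.empty even_zero)
next
  case True
  define n where "n = length vs"
  have n: "length es = n" "n \<ge> 3" "distinct vs"
    and de: "\<And>k. k < n \<Longrightarrow> dual_ends (es ! k) = {vs ! k, vs ! ((k + 1) mod n)}"
    using assms by (auto simp: simple_dual_cycle_def n_def)
  from True obtain i where i: "i < n" "d = vs ! i" by (auto simp: in_set_conv_nth n_def)
  define j where "j = (i + n - 1) mod n"
  have j: "j < n" using n by (simp add: j_def)
  have jv: "j = (if i = 0 then n - 1 else i - 1)"
  proof (cases "i = 0")
    case True then show ?thesis using n by (simp add: j_def)
  next
    case False
    then have "i + n - 1 = (i - 1) + n" by simp
    then have "j = (i - 1) mod n" by (simp add: j_def)
    then show ?thesis using i False by simp
  qed
  have iv: "(i + 1) mod n = (if i + 1 < n then i + 1 else 0)"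
  proof (cases "i + 1 < n")
    case False then have "i + 1 = n" using i by simp
    then show ?thesis by simp
  qed simp
  have j1: "(j + 1) mod n = i"
    using jv i n by (cases "i = 0") auto
  have ij: "i \<noteq> j" using jv i n by auto
  have nth_eq: "\<And>a b. a < n \<Longrightarrow> b < n \<Longrightarrow> vs ! a = vs ! b \<longleftrightarrow> a = b"
    using n(3) by (simp add: n_def nth_eq_iff_index_eq)
  have i1: "(i + 1) mod n < n" using n by simp
  have i1ne: "(i + 1) mod n \<noteq> j" using iv jv i n by auto
  have i1ne2: "(i + 1) mod n \<noteq> i" using iv i n by auto
  have S: "{e \<in> set es. d \<in> dual_ends e} = {es ! i, es ! j}"
  proof
    show "{e \<in> set es. d \<in> dual_ends e} \<subseteq> {es ! i, es ! j}"
    proof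
      fix e assume "e \<in> {e \<in> set es. d \<in> dual_ends e}"
      then obtain k where k: "k < n" "e = es ! k" "d \<in> dual_ends e" by (auto simp: in_set_conv_nth n)
      have k1: "(k + 1) mod n < n" using n by simp
      from k de have "d = vs ! k \<or> d = vs ! ((k + 1) mod n)" by auto
      then have "i = k \<or> i = (k + 1) mod n" using nth_eq[OF i(1)] k k1 i by auto
      moreover have "i = (k + 1) mod n \<Longrightarrow> k = j"
      proof -
        assume a: "i = (k + 1) mod n"
        show "k = j"
        proof (cases "k + 1 < n")
          case True then show ?thesis using a by (simp add: j_def)
        next
          case False then have "k = n - 1" using k by simp
          then show ?thesis using a n by (simp add: j_def)
        qed
      qed
      ultimately show "e \<in> {es ! i, es ! j}" using k by auto
    qed
  next
    show "{es ! i, es ! j} \<subseteq> {e \<in> set es. d \<in> dual_ends e}"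
      using de[OF i(1)] de[OF j] i j j1 n by auto
  qed
  have "es ! i \<noteq> es ! j"
  proof
    assume "es ! i = es ! j"
    then have "{vs ! i, vs ! ((i + 1) mod n)} = {vs ! j, vs ! i}" using de[OF i(1)] de[OF j] j1 by simp
    then have "vs ! ((i + 1) mod n) = vs ! j \<or> vs ! ((i+1) mod n) = vs ! i" by (auto simp: doubleton_eq_iff)
    then show False using nth_eq[OF i1 j] nth_eq[OF i1 i(1)] i1ne i1ne2 by auto
  qed
  then show ?thesis using S by simp
qed

lemma udc_props:
  assumes "union_disjoint_dual_cycles G"
  shows "finite G" "G \<noteq> {}" "\<And>d. even (card {e \<in> G. d \<in> dual_ends e})"
proof -
  obtain cs where cs: "cs \<noteq> []" "\<forall>c \<in> set cs. simple_dual_cycle (fst c) (snd c)"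
     "\<forall>i < length cs. \<forall>j < length cs. i \<noteq> j \<longrightarrow> set (fst (cs ! i)) \<inter> set (fst (cs ! j)) = {}"
     "G = (\<Union>c \<in> set cs. set (snd c))"
    using assms by (auto simp: union_disjoint_dual_cycles_def)
  show "finite G" using cs(4) by simp
  obtain c where c: "c \<in> set cs" using cs(1) by (cases cs) auto
  have "length (snd c) \<ge> 3" using cs(2) c by (auto simp: simple_dual_cycle_def)
  then have "snd c \<noteq> []" by auto
  moreover have "set (snd c) \<subseteq> G" using c cs(4) by auto
  ultimately show "G \<noteq> {}" by auto
  fix d
  show "even (card {e \<in> G. d \<in> dual_ends e})"
  proof (cases "\<exists>c \<in> set cs. d \<in> set (fst c)")
    case False
    then have "{e \<in> G. d \<in> dual_ends e} = {}" using cs cyc_ends_sub by fastforce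
    then show ?thesis by (metis card.empty even_zero)
  next
    case True
    then obtain c0 where c0: "c0 \<in> set cs" "d \<in> set (fst c0)" by auto
    have "{e \<in> G. d \<in> dual_ends e} = {e \<in> set (snd c0). d \<in> dual_ends e}"
    proof
      show "{e \<in> G. d \<in> dual_ends e} \<subseteq> {e \<in> set (snd c0). d \<in> dual_ends e}"
      proof
        fix e assume e: "e \<in> {e \<in> G. d \<in> dual_ends e}"
        then obtain c' where c': "c' \<in> set cs" "e \<in> set (snd c')" using cs(4) by auto
        have "d \<in> set (fst c')" using cyc_ends_sub[of "fst c'" "snd c'" e] c' cs(2) e by auto
        have "c' = c0"
        proof (rule ccontr)
          assume ne: "c' \<noteq> c0"
          obtain a where a: "a < length cs" "cs ! a = c'" using c'(1) by (auto simp: in_set_conv_nth)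
          obtain b where b: "b < length cs" "cs ! b = c0" using c0(1) by (auto simp: in_set_conv_nth)
          have "a \<noteq> b" using a b ne by auto
          then show False using cs(3) a b \<open>d \<in> set (fst c')\<close> c0(2) by auto
        qed
        then show "e \<in> {e \<in> set (snd c0). d \<in> dual_ends e}" using c' e by auto
      qed
    qed (use c0 cs(4) in auto)
    moreover have "even (card {e \<in> set (snd c0). d \<in> dual_ends e})"
      by (rule cyc_even) (use cs(2) c0(1) in auto)
    ultimately show ?thesis by (simp only:)
  qed
qed


definition good :: "edge set \<Rightarrow> bool" where
  "good G \<longleftrightarrow> finite G \<and> (\<forall>d. even (card {e \<in> G. d \<in> dual_ends e}))"

definition Ig :: "edge set \<Rightarrow> edge \<Rightarrow> nat" where
  "Ig G e = (if e \<in> G then 1 else 0)"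

definition pcnt :: "edge set \<Rightarrow> vtx \<Rightarrow> nat" where
  "pcnt G v = card {y. y < snd v \<and> ((fst v, y), True) \<in> G}"

lemma dual_ends_simp: "dual_ends ((x,y),d) = (if d then {(x-1,y),(x,y)} else {(x,y-1),(x,y)})"
  by (simp add: dual_ends_def)

lemma incid1: "((a, b) \<in> dual_ends ((x,y),d)) \<longleftrightarrow>
   ((x,y),d) \<in> {((a,b),True), ((a+1,b),True), ((a,b),False), ((a,b+1),False)}"
proof (cases d)
  case True
  then show ?thesis by (auto simp: dual_ends_simp)
next
  case False
  then show ?thesis by (auto simp: dual_ends_simp)
qed

lemma incid: "{e. (a, b) \<in> dual_ends e} = {((a,b),True), ((a+1,b),True), ((a,b),False), ((a,b+1),False)}"
proof (intro set_eqI)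
  fix e :: edge
  obtain x y d where e: "e = ((x,y),d)" by (metis prod.collapse)
  show "e \<in> {e. (a, b) \<in> dual_ends e} \<longleftrightarrow> e \<in> {((a,b),True), ((a+1,b),True), ((a,b),False), ((a,b+1),False)}"
    unfolding e mem_Collect_eq by (rule incid1)
qed

lemma card_Ig: "finite F \<Longrightarrow> card (G \<inter> F) = (\<Sum>x\<in>F. Ig G x)"
proof -
  assume F: "finite F"
  have "(\<Sum>x\<in>F. Ig G x) = (\<Sum>x\<in>F. if x \<in> G then 1 else 0)" by (simp add: Ig_def)
  also have "\<dots> = (\<Sum>x\<in>F \<inter> {x. x \<in> G}. 1)" using F by (simp add: sum.If_cases)
  also have "\<dots> = card (G \<inter> F)" by (simp add: Int_commute)
  finally show ?thesis by simp
qed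

lemma vert_even:
  assumes "good G"
  shows "even (Ig G ((a,b),True) + Ig G ((a+1,b),True) + Ig G ((a,b),False) + Ig G ((a,b+1),False))"
proof -
  have eq: "{e \<in> G. (a,b) \<in> dual_ends e} = G \<inter> {((a,b),True), ((a+1,b),True), ((a,b),False), ((a,b+1),False)}"
    using incid[of a b] by blast
  have c: "card (G \<inter> {((a,b),True), ((a+1,b),True), ((a,b),False), ((a,b+1),False)}) = Ig G ((a,b),True) + Ig G ((a+1,b),True) + Ig G ((a,b),False) + Ig G ((a,b+1),False)"
    by (subst card_Ig) auto
  have "even (card {e \<in> G. (a,b) \<in> dual_ends e})" using assms unfolding good_def by blast
  then show ?thesis unfolding eq c .
qed

lemma pcnt_fin: "finite G \<Longrightarrow> finite {y. y < yy \<and> ((x, y), True) \<in> G}"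
proof -
  assume "finite G"
  moreover have "{y. y < yy \<and> ((x, y), True) \<in> G} \<subseteq> (\<lambda>e. snd (fst e)) ` G" by force
  ultimately show ?thesis by (meson finite_imageI finite_subset)
qed

lemma pstep: "finite G \<Longrightarrow> pcnt G (x, y + 1) = pcnt G (x, y) + Ig G ((x,y),True)"
proof -
  assume G: "finite G"
  show ?thesis
  proof (cases "((x,y),True) \<in> G")
    case True
    then have "{y'. y' < y + 1 \<and> ((x, y'), True) \<in> G} = insert y {y'. y' < y \<and> ((x, y'), True) \<in> G}" by auto
    then show ?thesis using True pcnt_fin[OF G] by (simp add: pcnt_def Ig_def)
  next
    case False
    then have "{y'. y' < y + 1 \<and> ((x, y'), True) \<in> G} = {y'. y' < y \<and> ((x, y'), True) \<in> G}" by (auto simp: le_less)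
    then show ?thesis using False by (simp add: pcnt_def Ig_def)
  qed
qed

lemma low_bound: "finite (G :: edge set) \<Longrightarrow> \<exists>ylo. \<forall>e \<in> G. ylo \<le> snd (fst e)"
proof -
  assume "finite G"
  then have "finite ((\<lambda>e. snd (fst e)) ` G)" by simp
  then have "bdd_below ((\<lambda>e. snd (fst e)) ` G)" by (rule bdd_below_finite)
  then obtain m where "\<forall>z \<in> (\<lambda>e. snd (fst e)) ` G. m \<le> z"
    unfolding bdd_below_def by blast
  then show ?thesis by blast
qed

lemma pcnt_zero: "\<forall>e \<in> G. ylo \<le> snd (fst e) \<Longrightarrow> y \<le> ylo \<Longrightarrow> pcnt G (x, y) = 0"
proof -
  assume a: "\<forall>e \<in> G. ylo \<le> snd (fst e)" "y \<le> ylo"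
  have "{y'. y' < y \<and> ((x, y'), True) \<in> G} = {}"
  proof (rule ccontr)
    assume "{y'. y' < y \<and> ((x, y'), True) \<in> G} \<noteq> {}"
    then obtain y' where "y' < y" "((x, y'), True) \<in> G" by blast
    then have "ylo \<le> y'" using a(1) by fastforce
    then show False using \<open>y' < y\<close> a(2) by simp
  qed
  then show ?thesis unfolding pcnt_def by (metis card.empty snd_conv fst_conv)
qed

lemma rel:
  assumes "good G"
  shows "even (pcnt G (x,y) + pcnt G (x+1,y) + Ig G ((x,y),False))"
proof -
  have G: "finite G" using assms by (simp add: good_def)
  obtain ylo where ylo: "\<forall>e \<in> G. ylo \<le> snd (fst e)" using low_bound[OF G] by blast
  have "even (pcnt G (x,yy) + pcnt G (x+1,yy) + Ig G ((x,yy),False))" if "ylo - 1 \<le> yy" for yy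
    using that
  proof (induction rule: int_ge_induct)
    case base
    have "((x, ylo - 1), False) \<notin> G"
    proof
      assume "((x, ylo - 1), False) \<in> G"
      then have "ylo \<le> snd (fst ((x, ylo - 1), False))" using ylo by blast
      then show False by simp
    qed
    then show ?case using pcnt_zero[OF ylo] by (simp add: Ig_def)
  next
    case (step k)
    have "even (Ig G ((x,k),True) + Ig G ((x+1,k),True) + Ig G ((x,k),False) + Ig G ((x,k+1),False))"
      by (rule vert_even[OF assms])
    then show ?case using step by (simp add: pstep[OF G]) (smt (verit))
  qed
  moreover have "y < ylo - 1 \<Longrightarrow> even (pcnt G (x,y) + pcnt G (x+1,y) + Ig G ((x,y),False))"
  proof -
    assume "y < ylo - 1"
    moreover have "((x, y), False) \<notin> G"
    proof
      assume "((x, y), False) \<in> G"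
      then have "ylo \<le> snd (fst ((x, y), False))" using ylo by blast
      then show False using \<open>y < ylo - 1\<close> by simp
    qed
    ultimately show ?thesis using pcnt_zero[OF ylo] by (simp add: Ig_def)
  qed
  ultimately show ?thesis by (cases "ylo - 1 \<le> y") auto
qed

lemma edge_flip:
  assumes "good G"
  shows "(odd (pcnt G (src e)) \<noteq> odd (pcnt G (tgt e))) \<longleftrightarrow> e \<in> G"
proof -
  have G: "finite G" using assms by (simp add: good_def)
  obtain x y d where e: "e = ((x,y),d)" by (metis prod.collapse)
  show ?thesis
  proof (cases d)
    case True
    then show ?thesis using pstep[OF G, of x y] by (simp add: e src_def tgt_def Ig_def)
  next
    case False
    then show ?thesis using rel[OF assms, of x y] by (auto simp: e src_def tgt_def Ig_def split: if_splits)
  qed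
qed

lemma bounds:
  assumes "good G"
  shows "\<exists>xlo xhi ylo yhi. \<forall>x y. odd (pcnt G (x,y)) \<longrightarrow> xlo \<le> x \<and> x \<le> xhi \<and> ylo \<le> y \<and> y \<le> yhi"
proof -
  have G: "finite G" using assms by (simp add: good_def)
  have f1: "finite ((\<lambda>e. fst (fst e)) ` G)" "finite ((\<lambda>e. snd (fst e)) ` G)" using G by auto
  have "bdd_below ((\<lambda>e. fst (fst e)) ` G)" by (rule bdd_below_finite) (use f1 in simp)
  then obtain xlo where "\<forall>z\<in>(\<lambda>e. fst (fst e)) ` G. xlo \<le> z" unfolding bdd_below_def by blast
  then have xlo: "\<forall>e\<in>G. xlo \<le> fst (fst e)" by blast
  have "bdd_above ((\<lambda>e. fst (fst e)) ` G)" by (rule bdd_above_finite) (use f1 in simp)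
  then obtain xhi where "\<forall>z\<in>(\<lambda>e. fst (fst e)) ` G. z \<le> xhi" unfolding bdd_above_def by blast
  then have xhi: "\<forall>e\<in>G. fst (fst e) \<le> xhi" by blast
  have "bdd_below ((\<lambda>e. snd (fst e)) ` G)" by (rule bdd_below_finite) (use f1 in simp)
  then obtain ylo where "\<forall>z\<in>(\<lambda>e. snd (fst e)) ` G. ylo \<le> z" unfolding bdd_below_def by blast
  then have ylo: "\<forall>e\<in>G. ylo \<le> snd (fst e)" by blast
  have "bdd_above ((\<lambda>e. snd (fst e)) ` G)" by (rule bdd_above_finite) (use f1 in simp)
  then obtain yhi where "\<forall>z\<in>(\<lambda>e. snd (fst e)) ` G. z \<le> yhi" unfolding bdd_above_def by blast
  then have yhi: "\<forall>e\<in>G. snd (fst e) \<le> yhi" by blast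
  have col0: "\<And>x y. x < xlo \<or> x > xhi \<Longrightarrow> pcnt G (x,y) = 0"
  proof -
    fix x y :: int assume a: "x < xlo \<or> x > xhi"
    have "{y'. y' < y \<and> ((x, y'), True) \<in> G} = {}"
    proof (rule ccontr)
      assume "{y'. y' < y \<and> ((x, y'), True) \<in> G} \<noteq> {}"
      then obtain y' where "((x, y'), True) \<in> G" by blast
      then have "xlo \<le> fst (fst ((x, y'), True))" "fst (fst ((x, y'), True)) \<le> xhi" using xlo xhi by blast+
      then show False using a by simp
    qed
    then show "pcnt G (x,y) = 0" by (simp add: pcnt_def card_eq_0_iff)
  qed
  have top: "\<And>x y. y > yhi \<Longrightarrow> even (pcnt G (x,y))"
  proof -
    fix x y :: int assume y: "y > yhi"
    have "even (pcnt G (xx,y))" if "xlo - 1 \<le> xx" for xx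
      using that
    proof (induction rule: int_ge_induct)
      case base show ?case using col0 by simp
    next
      case (step k)
      moreover have "((k,y),False) \<notin> G"
      proof
        assume "((k,y),False) \<in> G"
        then have "snd (fst ((k,y),False)) \<le> yhi" using yhi by blast
        then show False using y by simp
      qed
      ultimately show ?case using rel[OF assms, of k y] by (simp add: Ig_def)
    qed
    then show "even (pcnt G (x,y))" using col0[of x y] by (cases "xlo - 1 \<le> x") auto
  qed
  have "\<forall>x y. odd (pcnt G (x,y)) \<longrightarrow> xlo \<le> x \<and> x \<le> xhi \<and> ylo < y \<and> y \<le> yhi"
  proof (intro allI impI)
    fix x y assume o: "odd (pcnt G (x,y))"
    have "xlo \<le> x \<and> x \<le> xhi" using col0[of x y] o by fastforce
    moreover have "ylo < y" using pcnt_zero[OF ylo, of y x] o by fastforce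
    moreover have "y \<le> yhi" using top[of y x] o by fastforce
    ultimately show "xlo \<le> x \<and> x \<le> xhi \<and> ylo < y \<and> y \<le> yhi" by simp
  qed
  then show ?thesis by (intro exI[of _ xlo] exI[of _ xhi] exI[of _ ylo] exI[of _ yhi]) fastforce
qed

lemma S_finite:
  assumes "good G"
  shows "finite {v. odd (pcnt G v)}"
proof -
  obtain xlo xhi ylo yhi where b: "\<forall>x y. odd (pcnt G (x,y)) \<longrightarrow> xlo \<le> x \<and> x \<le> xhi \<and> ylo \<le> y \<and> y \<le> yhi"
    using bounds[OF assms] by blast
  have "{v. odd (pcnt G v)} \<subseteq> {xlo..xhi} \<times> {ylo..yhi}" using b by auto
  then show ?thesis by (rule finite_subset) simp
qed

lemma udc_good: "union_disjoint_dual_cycles G \<Longrightarrow> good G"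
  using udc_props by (simp add: good_def)


definition rnd :: "real \<Rightarrow> int" where "rnd r = \<lfloor>r + 1/2\<rfloor>"

definition fpar :: "edge set \<Rightarrow> real \<times> real \<Rightarrow> bool" where
  "fpar G z = odd (pcnt G (rnd (fst z), rnd (snd z)))"

lemma rnd_lo: "real_of_int (rnd r) - 1/2 \<le> r"
  unfolding rnd_def using of_int_floor_le[of "r + 1/2"] by linarith

lemma rnd_hi: "r < real_of_int (rnd r) + 1/2"
  unfolding rnd_def using real_of_int_floor_add_one_gt[of "r + 1/2"] by linarith

lemma rnd_mono: "r \<le> s \<Longrightarrow> rnd r \<le> rnd s"
  unfolding rnd_def by (intro floor_mono) simp

lemma rnd_int: "rnd (real_of_int k) = k"
  unfolding rnd_def by linarith

lemma seg_vert_mem: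
  fixes a t c :: real
  assumes "a \<le> t" "t \<le> a + 1"
  shows "(c, t) \<in> closed_segment (c, a) (c, a + 1)"
proof -
  have "(c, t) = (1 - (t - a)) *\<^sub>R (c, a) + (t - a) *\<^sub>R (c, a + 1)"
    by (simp add: algebra_simps)
  then show ?thesis using assms unfolding closed_segment_def by (intro CollectI exI[of _ "t - a"]) auto
qed

lemma seg_hor_mem:
  fixes a t c :: real
  assumes "a \<le> t" "t \<le> a + 1"
  shows "(t, c) \<in> closed_segment (a, c) (a + 1, c)"
proof -
  have "(t, c) = (1 - (t - a)) *\<^sub>R (a, c) + (t - a) *\<^sub>R (a + 1, c)"
    by (simp add: algebra_simps)
  then show ?thesis using assms unfolding closed_segment_def by (intro CollectI exI[of _ "t - a"]) auto
qed

lemma dual_seg_F: "dual_seg ((x,y),False) =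
   closed_segment (real_of_int x + 1/2, real_of_int y - 1/2) (real_of_int x + 1/2, (real_of_int y - 1/2) + 1)"
  by (simp add: dual_seg_def dpt_def algebra_simps)

lemma dual_seg_T: "dual_seg ((x,y),True) =
   closed_segment (real_of_int x - 1/2, real_of_int y + 1/2) ((real_of_int x - 1/2) + 1, real_of_int y + 1/2)"
  by (simp add: dual_seg_def dpt_def algebra_simps)

lemma seg_h: "(real_of_int x + 1/2, t) \<in> dual_seg ((x, rnd t), False)"
  unfolding dual_seg_F using rnd_lo[of t] rnd_hi[of t] by (intro seg_vert_mem) auto

lemma seg_v: "(s, real_of_int y + 1/2) \<in> dual_seg ((rnd s, y), True)"
  unfolding dual_seg_T using rnd_lo[of s] rnd_hi[of s] by (intro seg_hor_mem) auto

lemma in_curve: "e \<in> G \<Longrightarrow> z \<in> dual_seg e \<Longrightarrow> z \<in> curve G"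
  unfolding curve_def by blast

lemma hmove0:
  assumes G: "good G" and s: "s1 \<le> s2" and nc: "\<forall>u. s1 \<le> u \<and> u \<le> s2 \<longrightarrow> (u, t) \<notin> curve G"
  shows "fpar G (s1, t) = fpar G (s2, t)"
proof -
  define y where "y = rnd t"
  have stp: "odd (pcnt G (k, y)) = odd (pcnt G (k + 1, y))" if k: "rnd s1 \<le> k" "k < rnd s2" for k
  proof -
    have "s1 \<le> real_of_int k + 1/2" using rnd_hi[of s1] k(1) by linarith
    moreover have "real_of_int k + 1/2 \<le> s2" using rnd_lo[of s2] k(2) by linarith
    ultimately have nk: "(real_of_int k + 1/2, t) \<notin> curve G" using nc by blast
    have "((k, y), False) \<notin> G"
    proof
      assume "((k, y), False) \<in> G"
      then have "(real_of_int k + 1/2, t) \<in> curve G" by (rule in_curve) (simp add: y_def seg_h)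
      then show False using nk by contradiction
    qed
    then have "\<not> (odd (pcnt G (src ((k, y), False))) \<noteq> odd (pcnt G (tgt ((k, y), False))))"
      using edge_flip[OF G, of "((k,y),False)"] by blast
    then show ?thesis by (simp add: src_def tgt_def)
  qed
  have ind: "k \<le> rnd s2 \<longrightarrow> odd (pcnt G (k, y)) = odd (pcnt G (rnd s1, y))" if "rnd s1 \<le> k" for k
    using that
  proof (induction rule: int_ge_induct)
    case base then show ?case by simp
  next
    case (step k)
    show ?case
    proof (intro impI)
      assume a: "k + 1 \<le> rnd s2"
      then have "odd (pcnt G (k, y)) = odd (pcnt G (rnd s1, y))" using step.IH by simp
      moreover have "odd (pcnt G (k, y)) = odd (pcnt G (k + 1, y))" using stp[OF step.hyps] a by simp
      ultimately show "odd (pcnt G (k + 1, y)) = odd (pcnt G (rnd s1, y))" by simp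
    qed
  qed
  have "odd (pcnt G (rnd s2, y)) = odd (pcnt G (rnd s1, y))" using ind[of "rnd s2"] rnd_mono[OF s] by simp
  then show ?thesis unfolding fpar_def y_def by simp
qed

lemma vmove0:
  assumes G: "good G" and s: "t1 \<le> t2" and nc: "\<forall>u. t1 \<le> u \<and> u \<le> t2 \<longrightarrow> (s, u) \<notin> curve G"
  shows "fpar G (s, t1) = fpar G (s, t2)"
proof -
  define x where "x = rnd s"
  have stp: "odd (pcnt G (x, k)) = odd (pcnt G (x, k + 1))" if k: "rnd t1 \<le> k" "k < rnd t2" for k
  proof -
    have "t1 \<le> real_of_int k + 1/2" using rnd_hi[of t1] k(1) by linarith
    moreover have "real_of_int k + 1/2 \<le> t2" using rnd_lo[of t2] k(2) by linarith
    ultimately have nk: "(s, real_of_int k + 1/2) \<notin> curve G" using nc by blast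
    have "((x, k), True) \<notin> G"
    proof
      assume "((x, k), True) \<in> G"
      then have "(s, real_of_int k + 1/2) \<in> curve G" by (rule in_curve) (simp add: x_def seg_v)
      then show False using nk by contradiction
    qed
    then have "\<not> (odd (pcnt G (src ((x, k), True))) \<noteq> odd (pcnt G (tgt ((x, k), True))))"
      using edge_flip[OF G, of "((x,k),True)"] by blast
    then show ?thesis by (simp add: src_def tgt_def)
  qed
  have ind: "k \<le> rnd t2 \<longrightarrow> odd (pcnt G (x, k)) = odd (pcnt G (x, rnd t1))" if "rnd t1 \<le> k" for k
    using that
  proof (induction rule: int_ge_induct)
    case base then show ?case by simp
  next
    case (step k)
    show ?case
    proof (intro impI)
      assume a: "k + 1 \<le> rnd t2"
      then have "odd (pcnt G (x, k)) = odd (pcnt G (x, rnd t1))" using step.IH by simp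
      moreover have "odd (pcnt G (x, k)) = odd (pcnt G (x, k + 1))" using stp[OF step.hyps] a by simp
      ultimately show "odd (pcnt G (x, k + 1)) = odd (pcnt G (x, rnd t1))" by simp
    qed
  qed
  have "odd (pcnt G (x, rnd t2)) = odd (pcnt G (x, rnd t1))" using ind[of "rnd t2"] rnd_mono[OF s] by simp
  then show ?thesis unfolding fpar_def x_def by simp
qed

lemma hmove:
  assumes G: "good G" and nc: "\<forall>u. min s1 s2 \<le> u \<and> u \<le> max s1 s2 \<longrightarrow> (u, t) \<notin> curve G"
  shows "fpar G (s1, t) = fpar G (s2, t)"
proof (cases "s1 \<le> s2")
  case True
  have "\<forall>u. s1 \<le> u \<and> u \<le> s2 \<longrightarrow> (u, t) \<notin> curve G"
  proof (intro allI impI)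
    fix u assume u: "s1 \<le> u \<and> u \<le> s2"
    then have "min s1 s2 \<le> u \<and> u \<le> max s1 s2" using True by (simp add: min_def max_def)
    then show "(u, t) \<notin> curve G" using nc by blast
  qed
  then show ?thesis by (rule hmove0[OF G True])
next
  case False
  then have s21: "s2 \<le> s1" by simp
  have "\<forall>u. s2 \<le> u \<and> u \<le> s1 \<longrightarrow> (u, t) \<notin> curve G"
  proof (intro allI impI)
    fix u assume u: "s2 \<le> u \<and> u \<le> s1"
    then have "min s1 s2 \<le> u \<and> u \<le> max s1 s2" using s21 by (simp add: min_def max_def)
    then show "(u, t) \<notin> curve G" using nc by blast
  qed
  then show ?thesis by (rule sym[OF hmove0[OF G s21]])
qed

lemma vmove:
  assumes G: "good G" and nc: "\<forall>u. min t1 t2 \<le> u \<and> u \<le> max t1 t2 \<longrightarrow> (s, u) \<notin> curve G"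
  shows "fpar G (s, t1) = fpar G (s, t2)"
proof (cases "t1 \<le> t2")
  case True
  have "\<forall>u. t1 \<le> u \<and> u \<le> t2 \<longrightarrow> (s, u) \<notin> curve G"
  proof (intro allI impI)
    fix u assume u: "t1 \<le> u \<and> u \<le> t2"
    then have "min t1 t2 \<le> u \<and> u \<le> max t1 t2" using True by (simp add: min_def max_def)
    then show "(s, u) \<notin> curve G" using nc by blast
  qed
  then show ?thesis by (rule vmove0[OF G True])
next
  case False
  then have t21: "t2 \<le> t1" by simp
  have "\<forall>u. t2 \<le> u \<and> u \<le> t1 \<longrightarrow> (s, u) \<notin> curve G"
  proof (intro allI impI)
    fix u assume u: "t2 \<le> u \<and> u \<le> t1"
    then have "min t1 t2 \<le> u \<and> u \<le> max t1 t2" using t21 by (simp add: min_def max_def)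
    then show "(s, u) \<notin> curve G" using nc by blast
  qed
  then show ?thesis by (rule sym[OF vmove0[OF G t21]])
qed

lemma closed_curve: "finite G \<Longrightarrow> closed (curve G)"
proof -
  assume G: "finite G"
  have "\<And>e. closed (dual_seg e)"
    by (simp add: dual_seg_def split: prod.splits)
  then show ?thesis unfolding curve_def using G by (intro closed_UN) auto
qed

lemma loc_const:
  assumes G: "good G" and z: "z \<notin> curve G"
  shows "\<exists>r>0. \<forall>z'. dist z' z < r \<longrightarrow> z' \<notin> curve G \<and> fpar G z' = fpar G z"
proof -
  have "open (- curve G)" using closed_curve G by (simp add: good_def open_Compl)
  then obtain d where d: "d > 0" "ball z d \<subseteq> - curve G" using z open_contains_ball_eq by blast
  obtain s t where st: "z = (s, t)" by (cases z)
  show ?thesis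
  proof (intro exI[of _ "d/2"] conjI allI impI)
    show "d / 2 > 0" using d by simp
    fix z' assume dz: "dist z' z < d / 2"
    obtain s' t' where st': "z' = (s', t')" by (cases z')
    have ds: "\<bar>s' - s\<bar> \<le> dist z' z" using dist_fst_le[of z' z] by (simp add: st st' dist_real_def)
    have dt: "\<bar>t' - t\<bar> \<le> dist z' z" using dist_snd_le[of z' z] by (simp add: st st' dist_real_def)
    have inb: "p \<notin> curve G" if "dist z p < d" for p using d(2) that by auto
    have h: "\<forall>u. min s s' \<le> u \<and> u \<le> max s s' \<longrightarrow> (u, t) \<notin> curve G"
    proof (intro allI impI)
      fix u assume u: "min s s' \<le> u \<and> u \<le> max s s'"
      have "dist z (u, t) = \<bar>s - u\<bar>" by (simp add: st dist_Pair_Pair dist_real_def)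
      also have "\<dots> \<le> \<bar>s' - s\<bar>" using u by linarith
      finally show "(u, t) \<notin> curve G" using inb ds dz by simp
    qed
    have v: "\<forall>u. min t t' \<le> u \<and> u \<le> max t t' \<longrightarrow> (s', u) \<notin> curve G"
    proof (intro allI impI)
      fix u assume u: "min t t' \<le> u \<and> u \<le> max t t'"
      have "dist z (s', u) = sqrt ((s - s')\<^sup>2 + (t - u)\<^sup>2)" by (simp add: st dist_Pair_Pair dist_real_def)
      also have "\<dots> \<le> \<bar>s - s'\<bar> + \<bar>t - u\<bar>" by (rule sqrt_sum_squares_le_sum_abs)
      also have "\<dots> \<le> \<bar>s' - s\<bar> + \<bar>t' - t\<bar>" using u by linarith
      finally show "(s', u) \<notin> curve G" using inb ds dt dz by simp
    qed
    have "(s', t') \<notin> curve G" using v by auto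
    then show "z' \<notin> curve G" by (simp add: st')
    have "fpar G (s', t) = fpar G (s, t)" using hmove[OF G h] by simp
    moreover have "fpar G (s', t') = fpar G (s', t)" using vmove[OF G v] by simp
    ultimately show "fpar G z' = fpar G z" by (simp add: st st')
  qed
qed

lemma half_ne: "real_of_int m \<noteq> real_of_int b + 1/2"
proof
  assume "real_of_int m = real_of_int b + 1/2"
  then have "real_of_int (2 * (m - b)) = 1" by simp
  then have "2 * (m - b) = 1" by linarith
  then show False by presburger
qed

lemma seg_fst_const:
  fixes p q z :: "real \<times> real"
  assumes "z \<in> closed_segment p q" "fst p = fst q" shows "fst z = fst p"
proof -
  obtain u where "z = (1 - u) *\<^sub>R p + u *\<^sub>R q" using assms(1) unfolding closed_segment_def by blast
  then have "fst z = (1 - u) * fst p + u * fst q" by simp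
  then show ?thesis using assms(2) by (simp add: algebra_simps)
qed

lemma seg_snd_const:
  fixes p q z :: "real \<times> real"
  assumes "z \<in> closed_segment p q" "snd p = snd q" shows "snd z = snd p"
proof -
  obtain u where "z = (1 - u) *\<^sub>R p + u *\<^sub>R q" using assms(1) unfolding closed_segment_def by blast
  then have "snd z = (1 - u) * snd p + u * snd q" by simp
  then show ?thesis using assms(2) by (simp add: algebra_simps)
qed

lemma ppt_not_curve: "ppt v \<notin> curve G"
proof
  assume "ppt v \<in> curve G"
  then obtain e where e: "ppt v \<in> dual_seg e" unfolding curve_def by blast
  obtain x y d where ed: "e = ((x,y),d)" by (metis prod.collapse)
  show False
  proof (cases d)
    case True
    then have "ppt v \<in> closed_segment (real_of_int x - 1/2, real_of_int y + 1/2) ((real_of_int x - 1/2) + 1, real_of_int y + 1/2)"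
      using e True ed dual_seg_T[of x y] by simp
    then have "snd (ppt v) = real_of_int y + 1/2" by (rule seg_snd_const[THEN trans]) simp_all
    then show False using half_ne by (simp add: ppt_def)
  next
    case False
    then have "ppt v \<in> closed_segment (real_of_int x + 1/2, real_of_int y - 1/2) (real_of_int x + 1/2, (real_of_int y - 1/2) + 1)"
      using e False ed dual_seg_F[of x y] by simp
    then have "fst (ppt v) = real_of_int x + 1/2" by (rule seg_fst_const[THEN trans]) simp_all
    then show False using half_ne by (simp add: ppt_def)
  qed
qed

lemma S_enclosed:
  assumes G: "good G" and v: "odd (pcnt G v)"
  shows "v \<in> enclosed G"
proof -
  obtain xlo xhi ylo yhi where b: "\<forall>x y. odd (pcnt G (x,y)) \<longrightarrow> xlo \<le> x \<and> x \<le> xhi \<and> ylo \<le> y \<and> y \<le> yhi"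
    using bounds[OF G] by blast
  define U where "U = {z. z \<notin> curve G \<and> fpar G z}"
  define V where "V = {z. z \<notin> curve G \<and> \<not> fpar G z}"
  define K where "K = connected_component_set (- curve G) (ppt v)"
  have oU: "open U" unfolding open_contains_ball
  proof
    fix z assume "z \<in> U"
    then obtain r where r: "r > 0" "\<forall>z'. dist z' z < r \<longrightarrow> z' \<notin> curve G \<and> fpar G z' = fpar G z"
      using loc_const[OF G] U_def by blast
    then have "ball z r \<subseteq> U" using \<open>z \<in> U\<close> unfolding U_def by (auto simp: dist_commute)
    then show "\<exists>e>0. ball z e \<subseteq> U" using r by blast
  qed
  have oV: "open V" unfolding open_contains_ball
  proof
    fix z assume "z \<in> V"
    then obtain r where r: "r > 0" "\<forall>z'. dist z' z < r \<longrightarrow> z' \<notin> curve G \<and> fpar G z' = fpar G z"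
      using loc_const[OF G] V_def by blast
    then have "ball z r \<subseteq> V" using \<open>z \<in> V\<close> unfolding V_def by (auto simp: dist_commute)
    then show "\<exists>e>0. ball z e \<subseteq> V" using r by blast
  qed
  have pv: "ppt v \<notin> curve G" by (rule ppt_not_curve)
  have fv: "fpar G (ppt v)" using v by (simp add: fpar_def ppt_def rnd_int)
  have KS: "K \<subseteq> U \<union> V" using connected_component_subset[of "- curve G" "ppt v"]
    unfolding K_def U_def V_def by auto
  have "ppt v \<in> K" unfolding K_def using pv by simp
  then have "U \<inter> K \<noteq> {}" using pv fv unfolding U_def by blast
  moreover have "U \<inter> V \<inter> K = {}" unfolding U_def V_def by blast
  ultimately have "V \<inter> K = {}" using connectedD[OF _ oU oV _ KS] unfolding K_def by blast
  then have KU: "K \<subseteq> U" using KS by blast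
  have "U \<subseteq> cbox (real_of_int xlo - 1, real_of_int ylo - 1) (real_of_int xhi + 1, real_of_int yhi + 1)"
  proof
    fix z assume "z \<in> U"
    then have "odd (pcnt G (rnd (fst z), rnd (snd z)))" by (simp add: U_def fpar_def)
    then have r: "xlo \<le> rnd (fst z) \<and> rnd (fst z) \<le> xhi \<and> ylo \<le> rnd (snd z) \<and> rnd (snd z) \<le> yhi"
      using b by blast
    have "real_of_int xlo - 1 \<le> fst z" "fst z \<le> real_of_int xhi + 1"
      using r rnd_lo[of "fst z"] rnd_hi[of "fst z"] by linarith+
    moreover have "real_of_int ylo - 1 \<le> snd z" "snd z \<le> real_of_int yhi + 1"
      using r rnd_lo[of "snd z"] rnd_hi[of "snd z"] by linarith+
    ultimately show "z \<in> cbox (real_of_int xlo - 1, real_of_int ylo - 1) (real_of_int xhi + 1, real_of_int yhi + 1)"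
      by (cases z) (simp add: cbox_Pair_iff)
  qed
  then have "bounded K" using KU by (meson bounded_cbox bounded_subset subset_trans)
  then show ?thesis using pv unfolding enclosed_def K_def by simp
qed


definition flip :: "vtx set \<Rightarrow> (vtx \<Rightarrow> real) \<Rightarrow> vtx \<Rightarrow> real" where
  "flip S \<sigma> = (\<lambda>v. if v \<in> S then - \<sigma> v else \<sigma> v)"

definition Sg :: "edge set \<Rightarrow> vtx set" where
  "Sg G = {v. odd (pcnt G v)}"

definition Eset :: "vtx set \<Rightarrow> edge set" where
  "Eset C = {e. src e \<in> cbar C \<and> tgt e \<in> cbar C}"

definition pats :: "vtx set \<Rightarrow> (vtx \<Rightarrow> bool) set" where
  "pats C = (\<lambda>B v. v \<in> B) ` Pow C"

definition mk :: "vtx set \<Rightarrow> (vtx \<Rightarrow> bool) \<Rightarrow> (vtx \<Rightarrow> real) \<Rightarrow> vtx \<Rightarrow> real" where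
  "mk C \<eta> \<tau> = (\<lambda>v. if v \<in> C then spin \<eta> v else if v \<in> bdry C then \<tau> v else 0)"

lemma flip_flip: "flip S (flip S \<sigma>) = \<sigma>"
  by (simp add: flip_def fun_eq_iff)

lemma adj_src_tgt: "adj (src e) (tgt e)"
  by (simp add: adj_def src_def tgt_def)

lemma adj_sym: "adj u v \<Longrightarrow> adj v u"
  by (simp add: adj_def abs_minus_commute)

lemma adj_cases: "adj u v \<Longrightarrow> v \<in> {(fst u + 1, snd u), (fst u - 1, snd u), (fst u, snd u + 1), (fst u, snd u - 1)}"
proof -
  assume "adj u v"
  then have h: "\<bar>fst u - fst v\<bar> + \<bar>snd u - snd v\<bar> = 1" by (simp add: adj_def)
  have "(fst v = fst u + 1 \<and> snd v = snd u) \<or> (fst v = fst u - 1 \<and> snd v = snd u) \<or>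
        (fst v = fst u \<and> snd v = snd u + 1) \<or> (fst v = fst u \<and> snd v = snd u - 1)"
    using h by arith
  then show ?thesis by (cases v) auto
qed

lemma finite_bdry: "finite C \<Longrightarrow> finite (bdry C)"
proof -
  assume C: "finite C"
  have "bdry C \<subseteq> (\<Union>u\<in>C. {(fst u + 1, snd u), (fst u - 1, snd u), (fst u, snd u + 1), (fst u, snd u - 1)})"
    unfolding bdry_def using adj_cases by blast
  moreover have "finite (\<Union>u\<in>C. {(fst u + 1, snd u), (fst u - 1, snd u), (fst u, snd u + 1), (fst u, snd u - 1)})"
    using C by simp
  ultimately show ?thesis by (rule finite_subset)
qed

lemma finite_cbar: "finite C \<Longrightarrow> finite (cbar C)"
  by (simp add: cbar_def finite_bdry)

lemma finite_Eset: "finite C \<Longrightarrow> finite (Eset C)"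
proof -
  assume C: "finite C"
  have "Eset C \<subseteq> cbar C \<times> UNIV" unfolding Eset_def src_def by auto
  moreover have "finite (cbar C \<times> (UNIV :: bool set))" using finite_cbar[OF C] by simp
  ultimately show ?thesis by (rule finite_subset)
qed

lemma C_bdry_disj: "C \<inter> bdry C = {}"
  by (auto simp: bdry_def)

lemma edge_S: "good G \<Longrightarrow> (src e \<in> Sg G) \<noteq> (tgt e \<in> Sg G) \<longleftrightarrow> e \<in> G"
  using edge_flip[of G e] by (simp add: Sg_def)

lemma G_in_E:
  assumes G: "good G" and SC: "Sg G \<subseteq> C" and e: "e \<in> G"
  shows "e \<in> Eset C"
proof -
  have one: "(src e \<in> Sg G) \<noteq> (tgt e \<in> Sg G)" using edge_S[OF G] e by blast
  have a1: "adj (src e) (tgt e)" "adj (tgt e) (src e)" using adj_src_tgt adj_sym by blast+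
  have c: "src e \<in> C \<or> tgt e \<in> C" using one SC by blast
  have "src e \<in> cbar C"
  proof (cases "src e \<in> C")
    case True then show ?thesis by (simp add: cbar_def)
  next
    case False then have "tgt e \<in> C" using c by blast
    then show ?thesis using False a1 by (auto simp: cbar_def bdry_def)
  qed
  moreover have "tgt e \<in> cbar C"
  proof (cases "tgt e \<in> C")
    case True then show ?thesis by (simp add: cbar_def)
  next
    case False then have "src e \<in> C" using c by blast
    then show ?thesis using False a1 by (auto simp: cbar_def bdry_def)
  qed
  ultimately show ?thesis by (simp add: Eset_def)
qed

lemma flip_prod:
  assumes G: "good G"
  shows "flip (Sg G) \<sigma> (src e) * flip (Sg G) \<sigma> (tgt e) = (if e \<in> G then - (\<sigma> (src e) * \<sigma> (tgt e)) else \<sigma> (src e) * \<sigma> (tgt e))"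
  using edge_S[OF G, of e] by (cases "src e \<in> Sg G"; cases "tgt e \<in> Sg G") (auto simp: flip_def)

lemma ham_flip:
  assumes G: "good G" and SC: "Sg G \<subseteq> C" and C: "finite C"
  shows "hamiltonian C w (flip (Sg G) \<sigma>) = hamiltonian C w \<sigma> + 2 * (\<Sum>e\<in>G. w e * \<sigma> (src e) * \<sigma> (tgt e))"
proof -
  define t where "t e = w e * \<sigma> (src e) * \<sigma> (tgt e)" for e
  have E: "finite (Eset C)" using finite_Eset[OF C] .
  have GE: "G \<subseteq> Eset C" using G_in_E[OF G SC] by blast
  have "(\<Sum>e\<in>Eset C. w e * flip (Sg G) \<sigma> (src e) * flip (Sg G) \<sigma> (tgt e))
      = (\<Sum>e\<in>Eset C. t e - 2 * (if e \<in> G then t e else 0))"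
    by (rule sum.cong) (auto simp: t_def flip_prod[OF G] mult.assoc)
  also have "\<dots> = (\<Sum>e\<in>Eset C. t e) - 2 * (\<Sum>e\<in>Eset C. if e \<in> G then t e else 0)"
    by (simp add: sum_subtractf sum_distrib_left)
  also have "(\<Sum>e\<in>Eset C. if e \<in> G then t e else 0) = (\<Sum>e\<in>Eset C \<inter> G. t e)"
    using E by (simp add: sum.inter_restrict)
  also have "Eset C \<inter> G = G" using GE by blast
  finally have "(\<Sum>e\<in>Eset C. w e * flip (Sg G) \<sigma> (src e) * flip (Sg G) \<sigma> (tgt e))
      = (\<Sum>e\<in>Eset C. t e) - 2 * (\<Sum>e\<in>G. t e)" .
  then show ?thesis unfolding hamiltonian_def Eset_def[symmetric] t_def by simp
qed

lemma finite_pats: "finite C \<Longrightarrow> finite (pats C)"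
  by (simp add: pats_def)

lemma mk_Omega: "mk C \<eta> \<tau> \<in> Omega C \<tau>"
  using C_bdry_disj[of C] by (auto simp: mk_def Omega_def spin_def cbar_def)

lemma Omega_mk: "Omega C \<tau> = (\<lambda>\<eta>. mk C \<eta> \<tau>) ` pats C"
proof
  show "(\<lambda>\<eta>. mk C \<eta> \<tau>) ` pats C \<subseteq> Omega C \<tau>" using mk_Omega by blast
  show "Omega C \<tau> \<subseteq> (\<lambda>\<eta>. mk C \<eta> \<tau>) ` pats C"
  proof
    fix \<sigma> assume s: "\<sigma> \<in> Omega C \<tau>"
    define B where "B = {v \<in> C. \<sigma> v = 1}"
    have "(\<lambda>v. v \<in> B) \<in> pats C" unfolding pats_def B_def by blast
    moreover have "mk C (\<lambda>v. v \<in> B) \<tau> = \<sigma>"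
    proof
      fix v
      show "mk C (\<lambda>v. v \<in> B) \<tau> v = \<sigma> v"
      proof (cases "v \<in> C")
        case True
        then have "\<sigma> v = 1 \<or> \<sigma> v = -1" using s by (simp add: Omega_def)
        then show ?thesis using True by (auto simp: mk_def spin_def B_def)
      next
        case False
        note vC = False
        show ?thesis
        proof (cases "v \<in> bdry C")
          case True
          then have "\<sigma> v = \<tau> v" using s unfolding Omega_def by blast
          then show ?thesis using True vC by (simp add: mk_def)
        next
          case False
          then have "v \<notin> cbar C" using vC by (simp add: cbar_def)
          then have "\<sigma> v = 0" using s unfolding Omega_def by blast
          then show ?thesis using False vC by (simp add: mk_def)
        qed
      qed
    qed
    ultimately show "\<sigma> \<in> (\<lambda>\<eta>. mk C \<eta> \<tau>) ` pats C" by (metis image_eqI)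
  qed
qed

lemma inj_mk: "inj_on (\<lambda>\<eta>. mk C \<eta> \<tau>) (pats C)"
proof
  fix \<eta> \<eta>' assume a: "\<eta> \<in> pats C" "\<eta>' \<in> pats C" "mk C \<eta> \<tau> = mk C \<eta>' \<tau>"
  show "\<eta> = \<eta>'"
  proof
    fix v
    show "\<eta> v = \<eta>' v"
    proof (cases "v \<in> C")
      case True
      then have "spin \<eta> v = spin \<eta>' v" using a(3) by (metis mk_def)
      then show ?thesis by (auto simp: spin_def split: if_splits)
    next
      case False
      then show ?thesis using a(1,2) by (auto simp: pats_def)
    qed
  qed
qed

lemma finite_Omega: "finite C \<Longrightarrow> finite (Omega C \<tau>)"
  by (simp add: Omega_mk finite_pats)

lemma Omega_ne: "Omega C \<tau> \<noteq> {}"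
  using mk_Omega by blast

lemma flip_Omega:
  assumes "S \<subseteq> C" "\<sigma> \<in> Omega C \<tau>"
  shows "flip S \<sigma> \<in> Omega C \<tau>"
  using assms C_bdry_disj[of C] by (auto simp: Omega_def flip_def cbar_def)


lemma pm_cbar:
  assumes "\<sigma> \<in> Omega D \<tau>" "\<forall>v\<in>bdry D. \<tau> v = 1 \<or> \<tau> v = -1" "v \<in> cbar D"
  shows "\<sigma> v = 1 \<or> \<sigma> v = -1"
  using assms unfolding Omega_def cbar_def by auto

lemma unsat_val:
  assumes "a = 1 \<or> a = -1" "b = 1 \<or> b = -1" "(x::real) * a * b < 0"
  shows "x * a * b = - \<bar>x\<bar>"
  using assms by (auto simp: abs_if)

lemma part2:
  assumes udc: "union_disjoint_dual_cycles \<gamma>" and \<beta>: "0 \<le> \<beta>" and D: "finite D"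
    and enc: "enclosed \<gamma> \<subseteq> D" and \<tau>: "\<forall>v\<in>bdry D. \<tau> v = 1 \<or> \<tau> v = -1"
  shows "gibbs_prob D \<tau> w \<beta> {\<sigma>. \<forall>e\<in>\<gamma>. unsatisfied w \<sigma> e} < exp (- 2 * \<beta> * absw w \<gamma>)"
proof -
  have G: "good \<gamma>" using udc_good[OF udc] .
  have gne: "\<gamma> \<noteq> {}" using udc_props(2)[OF udc] .
  have gfin: "finite \<gamma>" using udc_props(1)[OF udc] .
  define S where "S = Sg \<gamma>"
  have SD: "S \<subseteq> D" using S_enclosed[OF G] enc unfolding S_def Sg_def by blast
  define \<Omega> where "\<Omega> = Omega D \<tau>"
  define A where "A = {\<sigma>. \<forall>e\<in>\<gamma>. unsatisfied w \<sigma> e}"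
  define wt where "wt \<sigma> = exp (- \<beta> * hamiltonian D w \<sigma>)" for \<sigma>
  define k where "k = absw w \<gamma>"
  define \<phi> where "\<phi> = flip S"
  have fin\<Omega>: "finite \<Omega>" using finite_Omega[OF D] by (simp add: \<Omega>_def)
  have ne\<Omega>: "\<Omega> \<noteq> {}" using Omega_ne by (simp add: \<Omega>_def)
  have GE: "src e \<in> cbar D \<and> tgt e \<in> cbar D" if "e \<in> \<gamma>" for e
    using G_in_E[OF G _ that, of D] SD unfolding S_def Eset_def by blast
  have sumA: "(\<Sum>e\<in>\<gamma>. w e * \<sigma> (src e) * \<sigma> (tgt e)) = - k" if s: "\<sigma> \<in> \<Omega> \<inter> A" for \<sigma>
  proof -
    have "w e * \<sigma> (src e) * \<sigma> (tgt e) = - \<bar>w e\<bar>" if e: "e \<in> \<gamma>" for e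
    proof (rule unsat_val)
      show "\<sigma> (src e) = 1 \<or> \<sigma> (src e) = -1" using pm_cbar[of \<sigma> D \<tau>] s \<tau> GE[OF e] by (simp add: \<Omega>_def)
      show "\<sigma> (tgt e) = 1 \<or> \<sigma> (tgt e) = -1" using pm_cbar[of \<sigma> D \<tau>] s \<tau> GE[OF e] by (simp add: \<Omega>_def)
      show "w e * \<sigma> (src e) * \<sigma> (tgt e) < 0" using s e by (simp add: A_def unsatisfied_def)
    qed
    then have "(\<Sum>e\<in>\<gamma>. w e * \<sigma> (src e) * \<sigma> (tgt e)) = (\<Sum>e\<in>\<gamma>. - \<bar>w e\<bar>)" by (rule sum.cong[OF refl])
    then show ?thesis by (simp add: k_def absw_def sum_negf)
  qed
  have wt\<phi>: "wt (\<phi> \<sigma>) = exp (2 * \<beta> * k) * wt \<sigma>" if s: "\<sigma> \<in> \<Omega> \<inter> A" for \<sigma>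
  proof -
    have "hamiltonian D w (\<phi> \<sigma>) = hamiltonian D w \<sigma> - 2 * k"
      using ham_flip[OF G _ D, of w \<sigma>] SD sumA[OF s] by (simp add: \<phi>_def S_def)
    then have "- \<beta> * hamiltonian D w (\<phi> \<sigma>) = - \<beta> * (hamiltonian D w \<sigma> - 2 * k)"
      by (simp only:)
    also have "\<dots> = 2 * \<beta> * k + (- \<beta> * hamiltonian D w \<sigma>)" by (simp add: algebra_simps)
    finally have "- \<beta> * hamiltonian D w (\<phi> \<sigma>) = 2 * \<beta> * k + (- \<beta> * hamiltonian D w \<sigma>)" .
    then show ?thesis unfolding wt_def by (simp only: exp_add)
  qed
  have inj: "inj_on \<phi> (\<Omega> \<inter> A)"
    by (rule inj_on_inverseI[of _ \<phi>]) (simp add: \<phi>_def flip_flip)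
  have \<phi>\<Omega>: "\<phi> ` (\<Omega> \<inter> A) \<subseteq> \<Omega>"
    using flip_Omega[OF SD] by (auto simp: \<phi>_def \<Omega>_def)
  have disj: "(\<Omega> \<inter> A) \<inter> \<phi> ` (\<Omega> \<inter> A) = {}"
  proof (rule ccontr)
    assume "(\<Omega> \<inter> A) \<inter> \<phi> ` (\<Omega> \<inter> A) \<noteq> {}"
    then obtain \<sigma> where s: "\<sigma> \<in> \<Omega> \<inter> A" and fs: "\<phi> \<sigma> \<in> A" by blast
    obtain e where e: "e \<in> \<gamma>" using gne by blast
    have "w e * \<sigma> (src e) * \<sigma> (tgt e) < 0" using s e by (simp add: A_def unsatisfied_def)
    moreover have "w e * \<phi> \<sigma> (src e) * \<phi> \<sigma> (tgt e) < 0" using fs e by (simp add: A_def unsatisfied_def)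
    moreover have "\<phi> \<sigma> (src e) * \<phi> \<sigma> (tgt e) = - (\<sigma> (src e) * \<sigma> (tgt e))"
      using flip_prod[OF G, of \<sigma> e] e by (simp add: \<phi>_def S_def)
    ultimately show False by (simp add: mult.assoc)
  qed
  define a where "a = (\<Sum>\<sigma>\<in>\<Omega> \<inter> A. wt \<sigma>)"
  define b where "b = (\<Sum>\<sigma>\<in>\<phi> ` (\<Omega> \<inter> A). wt \<sigma>)"
  define Z where "Z = (\<Sum>\<sigma>\<in>\<Omega>. wt \<sigma>)"
  define E where "E = exp (2 * \<beta> * k)"
  have b: "b = E * a"
  proof -
    have "b = (\<Sum>\<sigma>\<in>\<Omega> \<inter> A. wt (\<phi> \<sigma>))" unfolding b_def using inj by (simp add: sum.reindex)
    also have "\<dots> = (\<Sum>\<sigma>\<in>\<Omega> \<inter> A. E * wt \<sigma>)" by (rule sum.cong) (simp_all add: wt\<phi> E_def)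
    finally show ?thesis by (simp add: a_def sum_distrib_left)
  qed
  have finA: "finite (\<Omega> \<inter> A)" using fin\<Omega> by simp
  have ab: "a + b \<le> Z"
  proof -
    have "a + b = (\<Sum>\<sigma>\<in>(\<Omega> \<inter> A) \<union> \<phi> ` (\<Omega> \<inter> A). wt \<sigma>)"
      unfolding a_def b_def using finA disj by (simp add: sum.union_disjoint)
    also have "\<dots> \<le> Z" unfolding Z_def
      by (rule sum_mono2[OF fin\<Omega>]) (use \<phi>\<Omega> in \<open>auto simp: wt_def\<close>)
    finally show ?thesis .
  qed
  have Zpos: "Z > 0" unfolding Z_def using fin\<Omega> ne\<Omega> by (intro sum_pos) (auto simp: wt_def)
  have a0: "a \<ge> 0" unfolding a_def by (intro sum_nonneg) (simp add: wt_def)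
  have Epos: "E > 0" by (simp add: E_def)
  have aE: "a * E < Z"
  proof (cases "a = 0")
    case True then show ?thesis using Zpos by simp
  next
    case False then have "a > 0" using a0 by simp
    then show ?thesis using ab b by (simp add: algebra_simps)
  qed
  have gp: "gibbs_prob D \<tau> w \<beta> {\<sigma>. \<forall>e\<in>\<gamma>. unsatisfied w \<sigma> e} = a / Z"
    by (simp add: gibbs_prob_def a_def Z_def \<Omega>_def A_def wt_def)
  have "a / Z < 1 / E" using aE Zpos Epos by (simp add: field_simps)
  also have "1 / E = exp (- 2 * \<beta> * absw w \<gamma>)" by (simp add: E_def k_def exp_minus field_simps)
  finally show ?thesis using gp by simp
qed


definition Xf :: "edge set \<Rightarrow> (edge \<Rightarrow> real) \<Rightarrow> (vtx \<Rightarrow> bool) \<Rightarrow> real" where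
  "Xf G w s = (\<Sum>e\<in>G. w e * spin s (src e) * spin s (tgt e))"

definition sub :: "vtx set \<Rightarrow> (vtx \<Rightarrow> bool) \<Rightarrow> (vtx \<Rightarrow> bool) \<Rightarrow> vtx \<Rightarrow> bool" where
  "sub C \<xi> s = (\<lambda>v. if v \<in> C then \<xi> v else s v)"

definition nx :: "vtx set \<Rightarrow> (vtx \<Rightarrow> bool) \<Rightarrow> vtx \<Rightarrow> bool" where
  "nx C \<xi> = (\<lambda>v. v \<in> C \<and> \<not> \<xi> v)"

definition wtf :: "vtx set \<Rightarrow> real \<Rightarrow> (edge \<Rightarrow> real) \<Rightarrow> (vtx \<Rightarrow> bool) \<Rightarrow> (vtx \<Rightarrow> bool) \<Rightarrow> real" where
  "wtf C \<beta> w s \<eta> = exp (- \<beta> * hamiltonian C w (mk C \<eta> (spin s)))"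

definition gf :: "vtx set \<Rightarrow> real \<Rightarrow> (vtx \<Rightarrow> bool) \<Rightarrow> (edge \<Rightarrow> real) \<times> (vtx \<Rightarrow> bool) \<Rightarrow> real" where
  "gf C \<beta> \<eta> x = wtf C \<beta> (fst x) (snd x) \<eta> / (\<Sum>\<eta>'\<in>pats C. wtf C \<beta> (fst x) (snd x) \<eta>')"

lemma spin_not: "spin (\<lambda>v. \<not> s v) u = - spin s u"
  by (simp add: spin_def)

lemma Xf_flip:
  assumes G: "good G"
  shows "Xf G w (\<lambda>v. if v \<in> Sg G then \<not> s v else s v) = - Xf G w s"
proof -
  have "w e * spin (\<lambda>v. if v \<in> Sg G then \<not> s v else s v) (src e) * spin (\<lambda>v. if v \<in> Sg G then \<not> s v else s v) (tgt e)
        = - (w e * spin s (src e) * spin s (tgt e))" if e: "e \<in> G" for e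
    using edge_S[OF G, of e] e
    by (cases "src e \<in> Sg G"; cases "tgt e \<in> Sg G") (auto simp: spin_def)
  then have "Xf G w (\<lambda>v. if v \<in> Sg G then \<not> s v else s v) = (\<Sum>e\<in>G. - (w e * spin s (src e) * spin s (tgt e)))"
    unfolding Xf_def by (rule sum.cong[OF refl])
  then show ?thesis by (simp add: Xf_def sum_negf)
qed

lemma gibbs_single:
  assumes C: "finite C" and \<xi>: "\<xi> \<in> pats C"
  shows "gibbs_prob C (spin s) w \<beta> {\<sigma>. \<forall>v\<in>C. \<sigma> v = spin \<xi> v} = gf C \<beta> \<xi> (w, s)"
proof -
  have one: "Omega C (spin s) \<inter> {\<sigma>. \<forall>v\<in>C. \<sigma> v = spin \<xi> v} = {mk C \<xi> (spin s)}"
  proof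
    show "Omega C (spin s) \<inter> {\<sigma>. \<forall>v\<in>C. \<sigma> v = spin \<xi> v} \<subseteq> {mk C \<xi> (spin s)}"
    proof
      fix \<sigma> assume a: "\<sigma> \<in> Omega C (spin s) \<inter> {\<sigma>. \<forall>v\<in>C. \<sigma> v = spin \<xi> v}"
      then obtain \<eta> where \<eta>: "\<sigma> = mk C \<eta> (spin s)" using Omega_mk by blast
      have "mk C \<eta> (spin s) = mk C \<xi> (spin s)"
      proof
        fix v show "mk C \<eta> (spin s) v = mk C \<xi> (spin s) v"
        proof (cases "v \<in> C")
          case True
          then have "\<sigma> v = spin \<xi> v" using a by blast
          then show ?thesis using True \<eta> by (simp add: mk_def)
        next
          case False then show ?thesis by (simp add: mk_def)
        qed
      qed
      then show "\<sigma> \<in> {mk C \<xi> (spin s)}" using \<eta> by simp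
    qed
    show "{mk C \<xi> (spin s)} \<subseteq> Omega C (spin s) \<inter> {\<sigma>. \<forall>v\<in>C. \<sigma> v = spin \<xi> v}"
      using mk_Omega by (auto simp: mk_def)
  qed
  have two: "(\<Sum>\<sigma>\<in>Omega C (spin s). exp (- \<beta> * hamiltonian C w \<sigma>)) = (\<Sum>\<eta>\<in>pats C. wtf C \<beta> w s \<eta>)"
    unfolding Omega_mk using inj_mk by (simp add: sum.reindex wtf_def)
  show ?thesis unfolding gibbs_prob_def one two by (simp add: gf_def wtf_def)
qed

lemma gf_bounds:
  assumes C: "finite C" and \<eta>: "\<eta> \<in> pats C"
  shows "0 \<le> gf C \<beta> \<eta> x \<and> gf C \<beta> \<eta> x \<le> 1"
proof -
  have pos: "\<And>\<eta>'. 0 < wtf C \<beta> (fst x) (snd x) \<eta>'" by (simp add: wtf_def)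
  have le: "wtf C \<beta> (fst x) (snd x) \<eta> \<le> (\<Sum>\<eta>'\<in>pats C. wtf C \<beta> (fst x) (snd x) \<eta>')"
    by (rule member_le_sum) (use \<eta> finite_pats[OF C] pos in \<open>auto intro: less_imp_le\<close>)
  have "0 < (\<Sum>\<eta>'\<in>pats C. wtf C \<beta> (fst x) (snd x) \<eta>')"
    by (rule sum_pos) (use \<eta> finite_pats[OF C] pos in auto)
  then show ?thesis using le pos[of \<eta>] unfolding gf_def by (simp add: divide_le_eq)
qed

lemma ratio:
  assumes G: "good G" and C: "C = Sg G" and fC: "finite C" and \<beta>: "0 \<le> \<beta>"
    and X: "Xf G w (sub C \<xi> s) \<le> - c"
  shows "wtf C \<beta> w s \<xi> \<le> exp (- 2 * \<beta> * c) * wtf C \<beta> w s (nx C \<xi>)"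
proof -
  define \<sigma>1 where "\<sigma>1 = mk C \<xi> (spin s)"
  have fl: "mk C (nx C \<xi>) (spin s) = flip (Sg G) \<sigma>1"
    unfolding \<sigma>1_def C[symmetric] by (auto simp: fun_eq_iff mk_def flip_def nx_def spin_def)
  have cb: "\<sigma>1 v = spin (sub C \<xi> s) v" if "v \<in> cbar C" for v
    using that by (auto simp: \<sigma>1_def mk_def sub_def cbar_def spin_def)
  have X1: "(\<Sum>e\<in>G. w e * \<sigma>1 (src e) * \<sigma>1 (tgt e)) = Xf G w (sub C \<xi> s)"
    unfolding Xf_def
  proof (rule sum.cong[OF refl])
    fix e assume e: "e \<in> G"
    have "e \<in> Eset C" using G_in_E[OF G _ e, of C] C by simp
    then show "w e * \<sigma>1 (src e) * \<sigma>1 (tgt e) = w e * spin (sub C \<xi> s) (src e) * spin (sub C \<xi> s) (tgt e)"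
      using cb by (simp add: Eset_def)
  qed
  have H: "hamiltonian C w (mk C (nx C \<xi>) (spin s)) = hamiltonian C w \<sigma>1 + 2 * Xf G w (sub C \<xi> s)"
    using ham_flip[OF G _ fC, of w \<sigma>1] C X1 fl by simp
  have "- \<beta> * hamiltonian C w \<sigma>1 + 2 * \<beta> * c \<le> - \<beta> * hamiltonian C w (mk C (nx C \<xi>) (spin s))"
  proof -
    have "\<beta> * Xf G w (sub C \<xi> s) \<le> \<beta> * (- c)" by (rule mult_left_mono[OF X \<beta>])
    then show ?thesis unfolding H by (simp add: algebra_simps)
  qed
  then have "exp (- \<beta> * hamiltonian C w \<sigma>1 + 2 * \<beta> * c) \<le> exp (- \<beta> * hamiltonian C w (mk C (nx C \<xi>) (spin s)))"
    by simp
  moreover have "exp (- \<beta> * hamiltonian C w \<sigma>1) = exp (- 2 * \<beta> * c) * exp (- \<beta> * hamiltonian C w \<sigma>1 + 2 * \<beta> * c)"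
    by (simp add: exp_add[symmetric])
  ultimately show ?thesis unfolding wtf_def \<sigma>1_def[symmetric] by simp
qed

lemma gf_ratio:
  assumes G: "good G" and C: "C = Sg G" and fC: "finite C" and \<beta>: "0 \<le> \<beta>"
    and X: "Xf G (fst x) (sub C \<xi> (snd x)) \<le> - c"
  shows "gf C \<beta> \<xi> x \<le> exp (- 2 * \<beta> * c) * gf C \<beta> (nx C \<xi>) x"
proof -
  define Z where "Z = (\<Sum>\<eta>'\<in>pats C. wtf C \<beta> (fst x) (snd x) \<eta>')"
  have Z: "0 \<le> Z" unfolding Z_def by (intro sum_nonneg) (simp add: wtf_def)
  have "wtf C \<beta> (fst x) (snd x) \<xi> / Z \<le> (exp (- 2 * \<beta> * c) * wtf C \<beta> (fst x) (snd x) (nx C \<xi>)) / Z"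
    by (rule divide_right_mono[OF ratio[OF G C fC \<beta> X] Z])
  then show ?thesis unfolding gf_def Z_def[symmetric] by simp
qed


lemma space_cs: "space config_space = UNIV"
  by (simp add: config_space_def space_pair_measure space_PiM)

lemma mw[measurable]: "(\<lambda>x. fst x e) \<in> borel_measurable config_space"
  unfolding config_space_def by measurable

lemma ms[measurable]: "(\<lambda>x. snd x v) \<in> measurable config_space (count_space UNIV)"
  unfolding config_space_def by measurable

lemma mspin[measurable]: "(\<lambda>x. spin (snd x) v) \<in> borel_measurable config_space"
  unfolding spin_def by measurable

lemma msub[measurable]: "(\<lambda>x. spin (sub C \<xi> (snd x)) u) \<in> borel_measurable config_space"
  unfolding spin_def sub_def by (cases "u \<in> C") simp_all

lemma mXf[measurable]: "(\<lambda>x. Xf G (fst x) (snd x)) \<in> borel_measurable config_space"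
  unfolding Xf_def by measurable

lemma mXfs[measurable]: "(\<lambda>x. Xf G (fst x) (sub C \<xi> (snd x))) \<in> borel_measurable config_space"
  unfolding Xf_def by measurable

lemma mwtf[measurable]: "(\<lambda>x. wtf C \<beta> (fst x) (snd x) \<eta>) \<in> borel_measurable config_space"
  unfolding wtf_def hamiltonian_def mk_def by measurable

lemma mgf[measurable]: "gf C \<beta> \<eta> \<in> borel_measurable config_space"
  unfolding gf_def by measurable

lemma sets_le: "{x. Xf G (fst x) (sub C \<xi> (snd x)) \<le> a} \<in> sets config_space"
proof -
  have "{x \<in> space config_space. Xf G (fst x) (sub C \<xi> (snd x)) \<le> a} \<in> sets config_space" by measurable
  then show ?thesis by (simp add: space_cs)
qed

lemma sets_le2: "{x. Xf G (fst x) (snd x) \<le> a} \<in> sets config_space"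
proof -
  have "{x \<in> space config_space. Xf G (fst x) (snd x) \<le> a} \<in> sets config_space" by measurable
  then show ?thesis by (simp add: space_cs)
qed

lemma sets_ge2: "{x. a \<le> Xf G (fst x) (snd x)} \<in> sets config_space"
proof -
  have "{x \<in> space config_space. a \<le> Xf G (fst x) (snd x)} \<in> sets config_space" by measurable
  then show ?thesis by (simp add: space_cs)
qed

lemma sets_snd: "{x. snd x v = b} \<in> sets config_space"
proof -
  have "(\<lambda>x. snd x v) -` {b} \<inter> space config_space \<in> sets config_space"
    by (rule measurable_sets[OF ms]) simp
  moreover have "(\<lambda>x. snd x v) -` {b} \<inter> space config_space = {x. snd x v = b}"
    by (auto simp: space_cs)
  ultimately show ?thesis by simp
qed

lemma sets_B:
  assumes C: "finite C"
  shows "{(w, s). \<forall>v\<in>C. s v = \<xi> v} \<in> sets config_space"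
proof (cases "C = {}")
  case True
  have "{(w, s). \<forall>v\<in>C. s v = \<xi> v} = space config_space"
    unfolding space_cs True by blast
  then show ?thesis using sets.top[of config_space] by (simp only:)
next
  case False
  have m: "(\<Inter>v\<in>C. {x. snd x v = \<xi> v}) \<in> sets config_space"
    by (rule sets.finite_INT[OF C False]) (rule sets_snd)
  have eq: "{(w, s). \<forall>v\<in>C. s v = \<xi> v} = (\<Inter>v\<in>C. {x. snd x v = \<xi> v})"
    by (rule set_eqI) (simp add: case_prod_beta)
  show ?thesis unfolding eq by (rule m)
qed


lemma part1:
  assumes udc: "union_disjoint_dual_cycles \<gamma>" and \<beta>: "0 \<le> \<beta>" and EA: "EA_distribution \<beta> M"
    and c: "c > 0"
  shows "measure M {(w, s). (\<Sum>e \<in> \<gamma>. w e * spin s (src e) * spin s (tgt e)) \<le> - c} < exp (- 2 * \<beta> * c)"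
proof -
  have G: "good \<gamma>" using udc_good[OF udc] .
  define C where "C = Sg \<gamma>"
  have fC: "finite C" using S_finite[OF G] by (simp add: C_def Sg_def)
  have PM: "prob_space M" and sM: "sets M = sets config_space" using EA by (simp_all add: EA_distribution_def)
  interpret prob_space M by (rule PM)
  have DLR: "\<And>C A (\<xi> :: vtx \<Rightarrow> bool). finite C \<Longrightarrow> A \<in> sets M \<Longrightarrow>
        (\<forall>w s s'. (w, s) \<in> A \<longrightarrow> (\<forall>v. v \<notin> C \<longrightarrow> s' v = s v) \<longrightarrow> (w, s') \<in> A) \<Longrightarrow>
        measure M (A \<inter> {(w, s). \<forall>v \<in> C. s v = \<xi> v}) =
          set_lebesgue_integral M A
            (\<lambda>(w, s). gibbs_prob C (spin s) w \<beta> {\<sigma>. \<forall>v \<in> C. \<sigma> v = spin \<xi> v})"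
    using EA unfolding EA_distribution_def by blast
  have meq: "measurable M N = measurable config_space N" for N :: "'b measure"
    by (rule measurable_cong_sets[OF sM refl])
  define P where "P = pats C"
  have fP: "finite P" unfolding P_def by (rule finite_pats[OF fC])
  define A where "A \<xi> = {x. Xf \<gamma> (fst x) (sub C \<xi> (snd x)) \<le> - c}" for \<xi>
  define B where "B \<xi> = {(w :: edge \<Rightarrow> real, s). \<forall>v \<in> C. s v = \<xi> v}" for \<xi> :: "vtx \<Rightarrow> bool"
  define E1 where "E1 = {x. Xf \<gamma> (fst x) (snd x) \<le> - c}"
  define E2 where "E2 = {x. c \<le> Xf \<gamma> (fst x) (snd x)}"
  define q where "q = exp (- 2 * \<beta> * c)"
  have Asets: "A \<xi> \<in> sets M" for \<xi> unfolding A_def sM by (rule sets_le)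
  have Bsets: "B \<xi> \<in> sets M" for \<xi> unfolding B_def sM by (rule sets_B[OF fC])
  have E1sets: "E1 \<in> sets M" unfolding E1_def sM by (rule sets_le2)
  have E2sets: "E2 \<in> sets M" unfolding E2_def sM by (rule sets_ge2)
  have goal_eq: "{(w, s). (\<Sum>e \<in> \<gamma>. w e * spin s (src e) * spin s (tgt e)) \<le> - c} = E1"
    unfolding E1_def Xf_def by (auto simp: case_prod_beta)
  have cover: "E1 \<subseteq> (\<Union>\<xi>\<in>P. A \<xi> \<inter> B \<xi>)"
  proof
    fix x assume x: "x \<in> E1"
    obtain w s where ws: "x = (w, s)" by (cases x)
    define \<xi> where "\<xi> = (\<lambda>v. v \<in> {v \<in> C. s v})"
    have "\<xi> \<in> P" unfolding P_def pats_def \<xi>_def by blast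
    moreover have "sub C \<xi> s = s" by (auto simp: sub_def \<xi>_def fun_eq_iff)
    then have "x \<in> A \<xi>" using x by (simp add: A_def E1_def ws)
    moreover have "x \<in> B \<xi>" by (simp add: B_def ws \<xi>_def)
    ultimately show "x \<in> (\<Union>\<xi>\<in>P. A \<xi> \<inter> B \<xi>)" by blast
  qed
  have s1: "measure M E1 \<le> (\<Sum>\<xi>\<in>P. measure M (A \<xi> \<inter> B \<xi>))"
  proof -
    have "measure M E1 \<le> measure M (\<Union>\<xi>\<in>P. A \<xi> \<inter> B \<xi>)"
      by (rule finite_measure_mono[OF cover]) (use fP Asets Bsets in auto)
    also have "\<dots> \<le> (\<Sum>\<xi>\<in>P. measure M (A \<xi> \<inter> B \<xi>))"
      by (rule finite_measure_subadditive_finite[OF fP]) (use Asets Bsets in auto)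
    finally show ?thesis .
  qed
  have sint: "set_integrable M (A \<xi>) h" if hm: "h \<in> borel_measurable config_space" and hb: "\<And>x. \<bar>h x\<bar> \<le> K" for \<xi> and h :: "_ \<Rightarrow> real" and K :: real
    unfolding set_integrable_def
  proof (rule integrable_const_bound[where B = K])
    show "AE x in M. norm (indicator (A \<xi>) x *\<^sub>R h x) \<le> K"
      using hb by (auto simp: indicator_def intro: order_trans[OF _ hb] intro!: AE_I2)
    show "(\<lambda>x. indicator (A \<xi>) x *\<^sub>R h x) \<in> borel_measurable M"
      using hm Asets[of \<xi>] unfolding meq by (intro borel_measurable_scaleR borel_measurable_indicator) (simp_all add: sM)
  qed
  have s2: "measure M (A \<xi> \<inter> B \<xi>) \<le> q * measure M (A \<xi> \<inter> B (nx C \<xi>))" if \<xi>: "\<xi> \<in> P" for \<xi>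
  proof -
    have nxP: "nx C \<xi> \<in> P" unfolding P_def pats_def nx_def by (rule image_eqI[of _ _ "{v \<in> C. \<not> \<xi> v}"]) auto
    have inv: "\<forall>w s s'. (w, s) \<in> A \<xi> \<longrightarrow> (\<forall>v. v \<notin> C \<longrightarrow> s' v = s v) \<longrightarrow> (w, s') \<in> A \<xi>"
    proof (intro allI impI)
      fix w s s' assume a: "(w, s) \<in> A \<xi>" "\<forall>v. v \<notin> C \<longrightarrow> s' v = s v"
      have "sub C \<xi> s' = sub C \<xi> s" using a(2) by (auto simp: sub_def fun_eq_iff)
      then show "(w, s') \<in> A \<xi>" using a(1) by (simp add: A_def)
    qed
    have intg: "(\<lambda>(w, s). gibbs_prob C (spin s) w \<beta> {\<sigma>. \<forall>v \<in> C. \<sigma> v = spin \<eta> v}) = gf C \<beta> \<eta>" if "\<eta> \<in> P" for \<eta>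
      using gibbs_single[OF fC, of \<eta>] that unfolding P_def by (auto simp: fun_eq_iff)
    have m1: "measure M (A \<xi> \<inter> B \<xi>) = set_lebesgue_integral M (A \<xi>) (gf C \<beta> \<xi>)"
      using DLR[OF fC Asets inv, of \<xi>] intg[OF \<xi>] unfolding B_def by simp
    have m2: "measure M (A \<xi> \<inter> B (nx C \<xi>)) = set_lebesgue_integral M (A \<xi>) (gf C \<beta> (nx C \<xi>))"
      using DLR[OF fC Asets inv, of "nx C \<xi>"] intg[OF nxP] unfolding B_def by simp
    have gb: "\<bar>gf C \<beta> \<eta> x\<bar> \<le> 1" if "\<eta> \<in> P" for \<eta> x
      using gf_bounds[OF fC, of \<eta> \<beta> x] that unfolding P_def by simp
    have i1: "set_integrable M (A \<xi>) (gf C \<beta> \<xi>)" by (rule sint[OF mgf gb[OF \<xi>]])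
    have i2: "set_integrable M (A \<xi>) (\<lambda>x. q * gf C \<beta> (nx C \<xi>) x)"
    proof (rule sint)
      show "(\<lambda>x. q * gf C \<beta> (nx C \<xi>) x) \<in> borel_measurable config_space" by measurable
      fix x have "\<bar>gf C \<beta> (nx C \<xi>) x\<bar> \<le> 1" by (rule gb[OF nxP])
      then show "\<bar>q * gf C \<beta> (nx C \<xi>) x\<bar> \<le> q" unfolding q_def
        by (simp add: abs_mult mult_left_le)
    qed
    have pw: "gf C \<beta> \<xi> x \<le> q * gf C \<beta> (nx C \<xi>) x" if "x \<in> A \<xi>" for x
      unfolding q_def by (rule gf_ratio[OF G C_def fC \<beta>]) (use that in \<open>simp add: A_def\<close>)
    have "set_lebesgue_integral M (A \<xi>) (gf C \<beta> \<xi>) \<le> set_lebesgue_integral M (A \<xi>) (\<lambda>x. q * gf C \<beta> (nx C \<xi>) x)"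
      by (rule set_integral_mono[OF i1 i2 pw])
    also have "\<dots> = q * set_lebesgue_integral M (A \<xi>) (gf C \<beta> (nx C \<xi>))" by simp
    finally show ?thesis using m1 m2 by simp
  qed
  have s3: "(\<Sum>\<xi>\<in>P. measure M (A \<xi> \<inter> B (nx C \<xi>))) \<le> measure M E2"
  proof -
    have disj: "disjoint_family_on (\<lambda>\<xi>. A \<xi> \<inter> B (nx C \<xi>)) P"
      unfolding disjoint_family_on_def
    proof (intro ballI impI)
      fix \<xi> \<eta> assume a: "\<xi> \<in> P" "\<eta> \<in> P" "\<xi> \<noteq> \<eta>"
      show "A \<xi> \<inter> B (nx C \<xi>) \<inter> (A \<eta> \<inter> B (nx C \<eta>)) = {}"
      proof (rule ccontr)
        assume "A \<xi> \<inter> B (nx C \<xi>) \<inter> (A \<eta> \<inter> B (nx C \<eta>)) \<noteq> {}"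
        then obtain w s where ws: "(w, s) \<in> B (nx C \<xi>)" "(w, s) \<in> B (nx C \<eta>)" by auto
        have "\<xi> = \<eta>"
        proof
          fix v show "\<xi> v = \<eta> v"
          proof (cases "v \<in> C")
            case True then show ?thesis using ws by (auto simp: B_def nx_def)
          next
            case False then show ?thesis using a(1,2) by (auto simp: P_def pats_def)
          qed
        qed
        then show False using a(3) by simp
      qed
    qed
    have sub2: "(\<Union>\<xi>\<in>P. A \<xi> \<inter> B (nx C \<xi>)) \<subseteq> E2"
    proof
      fix x assume "x \<in> (\<Union>\<xi>\<in>P. A \<xi> \<inter> B (nx C \<xi>))"
      then obtain \<xi> where x: "x \<in> A \<xi>" "x \<in> B (nx C \<xi>)" by blast
      obtain w s where ws: "x = (w, s)" by (cases x)
      have "sub C \<xi> s = (\<lambda>v. if v \<in> Sg \<gamma> then \<not> s v else s v)"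
        using x(2) by (auto simp: ws B_def nx_def sub_def C_def fun_eq_iff)
      then have "Xf \<gamma> w (sub C \<xi> s) = - Xf \<gamma> w s" using Xf_flip[OF G] by simp
      then show "x \<in> E2" using x(1) by (simp add: ws A_def E2_def)
    qed
    have "(\<Sum>\<xi>\<in>P. measure M (A \<xi> \<inter> B (nx C \<xi>))) = measure M (\<Union>\<xi>\<in>P. A \<xi> \<inter> B (nx C \<xi>))"
      by (rule finite_measure_finite_Union[symmetric, OF fP _ disj]) (use Asets Bsets in auto)
    also have "\<dots> \<le> measure M E2" by (rule finite_measure_mono[OF sub2 E2sets])
    finally show ?thesis .
  qed
  have s4: "measure M E1 + measure M E2 \<le> 1"
  proof -
    have "E1 \<inter> E2 = {}" using c by (auto simp: E1_def E2_def)
    then have "measure M (E1 \<union> E2) = measure M E1 + measure M E2"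
      by (rule finite_measure_Union[OF E1sets E2sets])
    moreover have "measure M (E1 \<union> E2) \<le> 1" by (rule prob_le_1)
    ultimately show ?thesis by simp
  qed
  have qpos: "q > 0" by (simp add: q_def)
  have m12: "measure M E1 \<le> q * measure M E2"
  proof -
    have "measure M E1 \<le> (\<Sum>\<xi>\<in>P. q * measure M (A \<xi> \<inter> B (nx C \<xi>)))"
      using s1 sum_mono[of P "\<lambda>\<xi>. measure M (A \<xi> \<inter> B \<xi>)" "\<lambda>\<xi>. q * measure M (A \<xi> \<inter> B (nx C \<xi>))"] s2
      by (meson order_trans)
    also have "\<dots> = q * (\<Sum>\<xi>\<in>P. measure M (A \<xi> \<inter> B (nx C \<xi>)))" by (simp add: sum_distrib_left)
    also have "\<dots> \<le> q * measure M E2" using s3 qpos by simp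
    finally show ?thesis .
  qed
  have "measure M E1 < q"
  proof (rule ccontr)
    assume "\<not> measure M E1 < q"
    then have h: "q \<le> measure M E1" by simp
    have "q * measure M E2 \<le> q * (1 - measure M E1)" using s4 qpos by simp
    also have "\<dots> \<le> q * (1 - q)" using h qpos by simp
    also have "\<dots> < q" using qpos h measure_le_1[of E1] by (simp add: algebra_simps)
    finally have "q * measure M E2 < q" .
    then show False using m12 h by simp
  qed
  then show ?thesis unfolding goal_eq q_def .
qed


theorem mainTheorem4:
  fixes \<beta> :: real
    and M :: "((edge \<Rightarrow> real) \<times> (vtx \<Rightarrow> bool)) measure"
    and \<gamma> :: "edge set"
  assumes "0 \<le> \<beta>"
    and "EA_distribution \<beta> M"
    and "translation_invariant M"
    and "union_disjoint_dual_cycles \<gamma>"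
  shows "(\<forall>c > 0. measure M {(w, s). (\<Sum>e \<in> \<gamma>. w e * spin s (src e) * spin s (tgt e)) \<le> - c}
                  < exp (- 2 * \<beta> * c))
       \<and> (\<forall>D \<tau> w. finite D \<longrightarrow> enclosed \<gamma> \<subseteq> D \<longrightarrow> (\<forall>v \<in> bdry D. \<tau> v = 1 \<or> \<tau> v = -1) \<longrightarrow>
            gibbs_prob D \<tau> w \<beta> {\<sigma>. \<forall>e \<in> \<gamma>. unsatisfied w \<sigma> e} < exp (- 2 * \<beta> * absw w \<gamma>))"
proof (intro conjI allI impI)
  fix c :: real assume "c > 0"
  then show "measure M {(w, s). (\<Sum>e \<in> \<gamma>. w e * spin s (src e) * spin s (tgt e)) \<le> - c} < exp (- 2 * \<beta> * c)"
    by (rule part1[OF assms(4) assms(1) assms(2)])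
next
  fix D and \<tau> :: "vtx \<Rightarrow> real" and w assume "finite D" "enclosed \<gamma> \<subseteq> D" "\<forall>v \<in> bdry D. \<tau> v = 1 \<or> \<tau> v = -1"
  then show "gibbs_prob D \<tau> w \<beta> {\<sigma>. \<forall>e \<in> \<gamma>. unsatisfied w \<sigma> e} < exp (- 2 * \<beta> * absw w \<gamma>)"
    by (rule part2[OF assms(4) assms(1)])
qed

end
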